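(* Let $f:\{0,1\}^n\to\{0,1\}^m$ and let $S=((\Lambda,\Gamma),(s_0,\dots,s_{k-1}))$ be a step CRN all of whose rules are $(2,0)$ rules. Suppose that for each input bit $x_i$ and each output bit $y_j$ there are species $0_{x_i},1_{x_i},0_{y_j},1_{y_j}$ (these $2n+2m$ species pairwise distinct) and nonnegative integers $c_{0,x_i},c_{1,x_i},c_{0,y_j},c_{1,y_j}$, such that for every input $b\in\{0,1\}^n$: the step CRN with steps $(s_0+X(b),s_1,\dots,s_{k-1})$, where $X(b)$ consists of exactly $c_{b_i,x_i}$ copies of $(b_i)_{x_i}$ and zero copies of $(1-b_i)_{x_i}$ for each $i$, has the property that every configuration in $\mathrm{TERM}_k$ contains, for each $j$, at least $c_{a,y_j}$ copies of $a_{y_j}$ and zero copies of $(1-a)_{y_j}$, where $a=f(b)_j$. Suppose further that $b,b'\in\{0,1\}^n$ differ only in coordinate $j_0$ and that $f(b)$ and $f(b')$ differ exactly in the coordinates $i_1,\dots,i_t$. Writing $C(z)=c_{0,z}+c_{1,z}$, we have $C(x_{j_0})\ge\sum_{r=1}^t C(y_{i_r})$.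
   Context: A configuration over an ordered alphabet of species $\Lambda$ is a vector in $\mathbb{Z}_{\ge 0}^{|\Lambda|}$ of copy counts. A $(2,0)$ rule has the form $A+B\to\emptyset$ (possibly $A=B$). A configuration is terminal if no rule applies. A step CRN with $k$ steps is $((\Lambda,\Gamma),(s_0,\dots,s_{k-1}))$; $\mathrm{REACH}_1$ is the set of configurations reachable by finitely many rule applications from $s_0$ and $\mathrm{TERM}_1$ its terminal elements; for $i\ge2$, $\mathrm{REACH}_i$ is the set of configurations reachable from $T+s_{i-1}$ for some $T\in\mathrm{TERM}_{i-1}$, and $\mathrm{TERM}_i$ its terminal elements. *)

theory Defs
  imports Main "HOL-Library.Multiset"
begin

(* Configurations: multisets of species (copy counts).
   A (2,0) rule A+B -> empty is represented by the pair (A,B) (A = B allowed). *)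

definition applies :: "('a \<times> 'a) \<Rightarrow> 'a multiset \<Rightarrow> bool" where
  "applies r c \<longleftrightarrow> {# fst r, snd r #} \<subseteq># c"

definition crn_step :: "('a \<times> 'a) set \<Rightarrow> 'a multiset \<Rightarrow> 'a multiset \<Rightarrow> bool" where
  "crn_step \<Gamma> c c' \<longleftrightarrow> (\<exists>r\<in>\<Gamma>. applies r c \<and> c' = c - {# fst r, snd r #})"

definition reachable :: "('a \<times> 'a) set \<Rightarrow> 'a multiset \<Rightarrow> 'a multiset \<Rightarrow> bool" where
  "reachable \<Gamma> c c' \<longleftrightarrow> (crn_step \<Gamma>)\<^sup>*\<^sup>* c c'"

definition terminal :: "('a \<times> 'a) set \<Rightarrow> 'a multiset \<Rightarrow> bool" where
  "terminal \<Gamma> c \<longleftrightarrow> (\<forall>r\<in>\<Gamma>. \<not> applies r c)"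

(* With C = {{#}} and steps
   s_0,...,s_{k-1}, this yields TERM_k. *)
fun term_after :: "('a \<times> 'a) set \<Rightarrow> 'a multiset set \<Rightarrow> 'a multiset list \<Rightarrow> 'a multiset set" where
  "term_after \<Gamma> C [] = C"
| "term_after \<Gamma> C (s # ss) =
     term_after \<Gamma> {T'. \<exists>T\<in>C. reachable \<Gamma> (T + s) T' \<and> terminal \<Gamma> T'} ss"

definition TERM_final :: "('a \<times> 'a) set \<Rightarrow> 'a multiset list \<Rightarrow> 'a multiset set" where
  "TERM_final \<Gamma> steps = term_after \<Gamma> {{#}} steps"

definition step_crn20 :: "'a set \<Rightarrow> ('a \<times> 'a) set \<Rightarrow> 'a multiset list \<Rightarrow> bool" where
  "step_crn20 \<Lambda> \<Gamma> steps \<longleftrightarrow> finite \<Lambda> \<and> finite \<Gamma> \<and> \<Gamma> \<subseteq> \<Lambda> \<times> \<Lambda> \<and> steps \<noteq> []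
      \<and> (\<forall>s\<in>set steps. set_mset s \<subseteq> \<Lambda>)"

definition input_config :: "nat \<Rightarrow> (nat \<Rightarrow> bool \<Rightarrow> 'a) \<Rightarrow> (nat \<Rightarrow> bool \<Rightarrow> nat) \<Rightarrow> bool list \<Rightarrow> 'a multiset" where
  "input_config n sx cx b = (\<Sum>i<n. replicate_mset (cx i (b ! i)) (sx i (b ! i)))"

end

theory Submission
  imports Defs
begin

definition md :: "'a multiset \<Rightarrow> 'a multiset \<Rightarrow> nat" where
  "md A B = size (A - B) + size (B - A)"

lemma md_sym: "md A B = md B A" by (simp add: md_def)

lemma rem1_gt:
  assumes "count A p > count U p"
  shows "md (A - {#p#}) U + 1 = md A U"
proof -
  have e1: "(A - {#p#}) - U = (A - U) - {#p#}"
    by (simp add: multiset_eq_iff)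
  have p: "p \<in># A - U" using assms by (simp add: in_diff_count)
  have e2: "U - (A - {#p#}) = U - A"
    using assms by (auto simp add: multiset_eq_iff)
  have a: "size ((A - U) - {#p#}) = size (A - U) - 1" by (rule size_Diff_singleton[OF p])
  have b: "size ((A - U) - {#p#}) < size (A - U)" by (rule size_Diff1_less[OF p])
  show ?thesis unfolding md_def e1 e2 using a b by linarith
qed

lemma rem1_le:
  shows "md (A - {#p#}) U \<le> md A U + 1"
proof (cases "count A p > count U p")
  case True then show ?thesis using rem1_gt[OF True] by simp
next
  case False
  have e1: "(A - {#p#}) - U = A - U"
    using False by (auto simp add: multiset_eq_iff)
  have e2: "U - (A - {#p#}) \<subseteq># (U - A) + {#p#}"
    by (auto simp add: subseteq_mset_def)
  show ?thesis unfolding md_def e1 using size_mset_mono[OF e2] by simp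
qed

lemma rem_same:
  assumes "R \<subseteq># A" "R \<subseteq># U"
  shows "md (A - R) (U - R) = md A U"
proof -
  have "(A - R) - (U - R) = A - U" "(U - R) - (A - R) = U - A"
    using assms by (auto simp add: multiset_eq_iff subseteq_mset_def)
  then show ?thesis by (simp add: md_def)
qed

lemma rem_pair:
  assumes "{#p, q#} \<subseteq># A" "\<not> {#p, q#} \<subseteq># U"
  shows "md (A - {#p, q#}) U \<le> md A U"
proof (cases "p = q")
  case True
  have cA: "count A p \<ge> 2" using assms(1) True
    by (auto simp add: subseteq_mset_def split: if_splits dest: spec[of _ p])
  have cU: "count U p < 2" using assms(2) True
    by (auto simp add: subseteq_mset_def split: if_splits)
  have "md (A - {#p#}) U + 1 = md A U" by (rule rem1_gt) (use cA cU in simp)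
  moreover have "md (A - {#p#} - {#p#}) U \<le> md (A - {#p#}) U + 1" by (rule rem1_le)
  moreover have e: "A - {#p, q#} = A - {#p#} - {#p#}" using True by (simp add: multiset_eq_iff)
  ultimately show ?thesis unfolding e by linarith
next
  case False
  have cA: "count A p \<ge> 1" "count A q \<ge> 1" using assms(1) False
    by (auto simp add: subseteq_mset_def split: if_splits dest: spec[of _ p] spec[of _ q])
  have cU: "count U p = 0 \<or> count U q = 0"
  proof (rule ccontr)
    assume "\<not> (count U p = 0 \<or> count U q = 0)"
    then have "{#p, q#} \<subseteq># U" using False by (auto simp add: subseteq_mset_def)
    then show False using assms(2) by simp
  qed
  then show ?thesis
  proof
    assume u: "count U p = 0"
    have "md (A - {#p#}) U + 1 = md A U" by (rule rem1_gt) (use cA u in simp)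
    moreover have "md (A - {#p#} - {#q#}) U \<le> md (A - {#p#}) U + 1" by (rule rem1_le)
    moreover have e: "A - {#p, q#} = A - {#p#} - {#q#}" by (simp add: multiset_eq_iff)
    ultimately show ?thesis unfolding e by linarith
  next
    assume u: "count U q = 0"
    have "md (A - {#q#}) U + 1 = md A U" by (rule rem1_gt) (use cA u in simp)
    moreover have "md (A - {#q#} - {#p#}) U \<le> md (A - {#q#}) U + 1" by (rule rem1_le)
    moreover have e: "A - {#p, q#} = A - {#q#} - {#p#}" by (simp add: multiset_eq_iff)
    ultimately show ?thesis unfolding e by linarith
  qed
qed

lemma sim:
  assumes "(crn_step \<Gamma>)\<^sup>*\<^sup>* A B"
  shows "\<exists>U'. (crn_step \<Gamma>)\<^sup>*\<^sup>* U U' \<and> md B U' \<le> md A U"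
  using assms
proof (induction rule: rtranclp_induct)
  case base then show ?case by auto
next
  case (step B C)
  then obtain U' where U': "(crn_step \<Gamma>)\<^sup>*\<^sup>* U U'" "md B U' \<le> md A U" by auto
  from step(2) obtain r where r: "r \<in> \<Gamma>" "applies r B" "C = B - {#fst r, snd r#}"
    by (auto simp: crn_step_def)
  show ?case
  proof (cases "applies r U'")
    case True
    then have "crn_step \<Gamma> U' (U' - {#fst r, snd r#})" using r by (auto simp: crn_step_def)
    moreover have "md C (U' - {#fst r, snd r#}) = md B U'"
      using r True by (simp add: applies_def rem_same)
    ultimately show ?thesis using U' by (metis rtranclp.rtrancl_into_rtrancl)
  next
    case False
    then have "md C U' \<le> md B U'" using r rem_pair by (auto simp: applies_def)
    then show ?thesis using U' by auto
  qed
qed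

lemma complete:
  assumes "terminal \<Gamma> T"
  shows "\<exists>T'. reachable \<Gamma> U T' \<and> terminal \<Gamma> T' \<and> md T T' \<le> md T U"
proof (induction "size U" arbitrary: U rule: less_induct)
  case less
  show ?case
  proof (cases "terminal \<Gamma> U")
    case True then show ?thesis by (auto simp: reachable_def)
  next
    case False
    then obtain r where r: "r \<in> \<Gamma>" "applies r U" by (auto simp: terminal_def)
    let ?U = "U - {#fst r, snd r#}"
    have st: "crn_step \<Gamma> U ?U" using r by (auto simp: crn_step_def)
    have "size {#fst r, snd r#} \<le> size U" using r(2) unfolding applies_def by (rule size_mset_mono)
    then have sz: "size ?U < size U" using r by (simp add: applies_def size_Diff_submset)
    have nT: "\<not> applies r T" using assms r by (auto simp: terminal_def)
    have "md ?U T \<le> md U T" using r nT rem_pair by (auto simp: applies_def)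
    then have d: "md T ?U \<le> md T U" by (simp add: md_sym)
    from less(1)[OF sz] obtain T' where "reachable \<Gamma> ?U T'" "terminal \<Gamma> T'" "md T T' \<le> md T ?U"
      by blast
    then show ?thesis using st d unfolding reachable_def
      by (meson converse_rtranclp_into_rtranclp order_trans)
  qed
qed

lemma exists_term: "\<exists>T'. reachable \<Gamma> U T' \<and> terminal \<Gamma> T'"
proof (induction "size U" arbitrary: U rule: less_induct)
  case less
  show ?case
  proof (cases "terminal \<Gamma> U")
    case True then show ?thesis by (auto simp: reachable_def)
  next
    case False
    then obtain r where r: "r \<in> \<Gamma>" "applies r U" by (auto simp: terminal_def)
    let ?U = "U - {#fst r, snd r#}"
    have st: "crn_step \<Gamma> U ?U" using r by (auto simp: crn_step_def)
    have "size {#fst r, snd r#} \<le> size U" using r(2) unfolding applies_def by (rule size_mset_mono)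
    then have sz: "size ?U < size U" using r by (simp add: applies_def size_Diff_submset)
    from less(1)[OF sz] show ?thesis using st unfolding reachable_def
      by (meson converse_rtranclp_into_rtranclp)
  qed
qed

lemma one_step:
  assumes "reachable \<Gamma> X T1" "terminal \<Gamma> T1"
  shows "\<exists>T1'. reachable \<Gamma> Y T1' \<and> terminal \<Gamma> T1' \<and> md T1 T1' \<le> md X Y"
proof -
  obtain U where U: "reachable \<Gamma> Y U" "md T1 U \<le> md X Y"
    using sim assms(1) unfolding reachable_def by blast
  obtain T' where "reachable \<Gamma> U T'" "terminal \<Gamma> T'" "md T1 T' \<le> md T1 U"
    using complete[OF assms(2)] by blast
  then show ?thesis using U unfolding reachable_def
    by (meson order_trans rtranclp_trans)
qed

lemma md_add: "md (A + s) (B + s) = md A B"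
  by (simp add: md_def)

lemma stage:
  assumes "\<forall>T\<in>C. \<exists>T'\<in>C'. md T T' \<le> k"
  shows "\<forall>T\<in>term_after \<Gamma> C ss. \<exists>T'\<in>term_after \<Gamma> C' ss. md T T' \<le> k"
  using assms
proof (induction ss arbitrary: C C')
  case Nil then show ?case by simp
next
  case (Cons s ss)
  have "\<forall>T1\<in>{T'. \<exists>T\<in>C. reachable \<Gamma> (T + s) T' \<and> terminal \<Gamma> T'}.
        \<exists>T1'\<in>{T'. \<exists>T\<in>C'. reachable \<Gamma> (T + s) T' \<and> terminal \<Gamma> T'}. md T1 T1' \<le> k"
  proof
    fix T1 assume "T1 \<in> {T'. \<exists>T\<in>C. reachable \<Gamma> (T + s) T' \<and> terminal \<Gamma> T'}"
    then obtain T where T: "T \<in> C" "reachable \<Gamma> (T + s) T1" "terminal \<Gamma> T1" by auto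
    obtain T' where T': "T' \<in> C'" "md T T' \<le> k" using Cons.prems T(1) by auto
    obtain T1' where "reachable \<Gamma> (T' + s) T1'" "terminal \<Gamma> T1'" "md T1 T1' \<le> md (T + s) (T' + s)"
      using one_step[OF T(2,3)] by blast
    then show "\<exists>T1'\<in>{T'. \<exists>T\<in>C'. reachable \<Gamma> (T + s) T' \<and> terminal \<Gamma> T'}. md T1 T1' \<le> k"
      using T' by (auto simp: md_add)
  qed
  then show ?case by (simp only: term_after.simps) (rule Cons.IH)
qed

lemma nonempty: "C \<noteq> {} \<Longrightarrow> term_after \<Gamma> C ss \<noteq> {}"
proof (induction ss arbitrary: C)
  case Nil then show ?case by simp
next
  case (Cons s ss)
  then obtain T where "T \<in> C" by auto
  moreover obtain T' where "reachable \<Gamma> (T + s) T'" "terminal \<Gamma> T'" using exists_term by blast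
  ultimately have "{T'. \<exists>T\<in>C. reachable \<Gamma> (T + s) T' \<and> terminal \<Gamma> T'} \<noteq> {}" by auto
  then show ?case using Cons.IH by simp
qed

lemma sum_count_le_size:
  assumes "finite S"
  shows "(\<Sum>x\<in>S. count M x) \<le> size M"
proof -
  have "(\<Sum>x\<in>S. count M x) = (\<Sum>x\<in>S \<inter> set_mset M. count M x)"
    using assms by (intro sum.mono_neutral_right) auto
  also have "\<dots> \<le> (\<Sum>x\<in>set_mset M. count M x)"
    by (intro sum_mono2) auto
  also have "\<dots> = size M" by (simp add: size_multiset_overloaded_eq)
  finally show ?thesis .
qed

theorem mainTheorem4:
  fixes n m :: nat
    and f :: "bool list \<Rightarrow> bool list"
    and \<Lambda> :: "'a set" and \<Gamma> :: "('a \<times> 'a) set"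
    and s0 :: "'a multiset" and ss :: "'a multiset list"
    and sx sy :: "nat \<Rightarrow> bool \<Rightarrow> 'a"
    and cx cy :: "nat \<Rightarrow> bool \<Rightarrow> nat"
    and b b' :: "bool list" and j0 :: nat
  assumes f_len: "\<And>b. length b = n \<Longrightarrow> length (f b) = m"
    and crn: "step_crn20 \<Lambda> \<Gamma> (s0 # ss)"
    and sx_in: "\<And>i v. i < n \<Longrightarrow> sx i v \<in> \<Lambda>"
    and sy_in: "\<And>j v. j < m \<Longrightarrow> sy j v \<in> \<Lambda>"
    and distinct: "inj_on (\<lambda>p. case p of Inl (i, v) \<Rightarrow> sx i v | Inr (j, v) \<Rightarrow> sy j v)
                      (Inl ` ({..<n} \<times> UNIV) \<union> Inr ` ({..<m} \<times> UNIV))"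
    and computes: "\<And>b. length b = n \<Longrightarrow>
         \<forall>T\<in>TERM_final \<Gamma> ((s0 + input_config n sx cx b) # ss).
           \<forall>j<m. cy j (f b ! j) \<le> count T (sy j (f b ! j))
                 \<and> count T (sy j (\<not> (f b ! j))) = 0"
    and b_len: "length b = n" and b'_len: "length b' = n"
    and j0: "j0 < n" and differ: "b ! j0 \<noteq> b' ! j0"
    and same: "\<And>i. i < n \<Longrightarrow> i \<noteq> j0 \<Longrightarrow> b ! i = b' ! i"
  shows "(\<Sum>i\<in>{i. i < m \<and> f b ! i \<noteq> f b' ! i}. cy i False + cy i True)
           \<le> cx j0 False + cx j0 True"
  proof -
  let ?A = "s0 + input_config n sx cx b" and ?A' = "s0 + input_config n sx cx b'"
  define P where "P = (\<Sum>i\<in>{..<n}-{j0}. replicate_mset (cx i (b ! i)) (sx i (b ! i)))"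
  have P': "P = (\<Sum>i\<in>{..<n}-{j0}. replicate_mset (cx i (b' ! i)) (sx i (b' ! i)))"
    unfolding P_def by (rule sum.cong) (auto simp: same)
  define R where "R = replicate_mset (cx j0 (b!j0)) (sx j0 (b!j0))"
  define R' where "R' = replicate_mset (cx j0 (b'!j0)) (sx j0 (b'!j0))"
  have Ib: "input_config n sx cx b = R + P"
    unfolding input_config_def P_def R_def using j0 by (simp add: sum.remove)
  have Ib': "input_config n sx cx b' = R' + P"
    unfolding input_config_def P' R'_def using j0 by (simp add: sum.remove)
  have eA: "?A = R + (s0 + P)" by (simp add: Ib add_ac)
  have eA': "?A' = R' + (s0 + P)" by (simp add: Ib' add_ac)
  have "md R R' \<le> size R + size R'"
    unfolding md_def using size_mset_mono[OF diff_subset_eq_self[of R R']]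
      size_mset_mono[OF diff_subset_eq_self[of R' R]] by linarith
  also have "\<dots> = cx j0 False + cx j0 True"
    using differ unfolding R_def R'_def by (cases "b ! j0") auto
  finally have dA: "md ?A ?A' \<le> cx j0 False + cx j0 True"
    unfolding eA eA' md_add .
  define C1 where "C1 = {T'. reachable \<Gamma> ?A T' \<and> terminal \<Gamma> T'}"
  define C1' where "C1' = {T'. reachable \<Gamma> ?A' T' \<and> terminal \<Gamma> T'}"
  have TF: "TERM_final \<Gamma> (?A # ss) = term_after \<Gamma> C1 ss"
    unfolding TERM_final_def C1_def by simp
  have TF': "TERM_final \<Gamma> (?A' # ss) = term_after \<Gamma> C1' ss"
    unfolding TERM_final_def C1'_def by simp
  have "C1 \<noteq> {}" unfolding C1_def using exists_term by blast
  then obtain T where T: "T \<in> TERM_final \<Gamma> (?A # ss)" unfolding TF using nonempty by blast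
  have "\<forall>T\<in>C1. \<exists>T'\<in>C1'. md T T' \<le> md ?A ?A'"
    unfolding C1_def C1'_def using one_step by blast
  from stage[OF this, of \<Gamma> ss] T obtain T' where
    T': "T' \<in> TERM_final \<Gamma> (?A' # ss)" and dT: "md T T' \<le> md ?A ?A'"
    unfolding TF TF' by blast
  note cT = computes[OF b_len, rule_format, OF T]
  note cT' = computes[OF b'_len, rule_format, OF T']
  define D where "D = {i. i < m \<and> f b ! i \<noteq> f b' ! i}"
  have finD: "finite D" unfolding D_def by simp
  have injsy: "\<And>i j v w. i < m \<Longrightarrow> j < m \<Longrightarrow> sy i v = sy j w \<Longrightarrow> i = j"
  proof -
    fix i j v w assume "i < m" "j < m" "sy i v = sy j w"
    then have "Inr (i, v) = (Inr (j, w) :: (nat \<times> bool) + (nat \<times> bool))"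
      using inj_onD[OF distinct, of "Inr (i, v)" "Inr (j, w)"] by auto
    then show "i = j" by simp
  qed
  have inj1: "inj_on (\<lambda>i. sy i (f b ! i)) D"
    by (rule inj_onI) (use injsy in \<open>auto simp: D_def\<close>)
  have inj2: "inj_on (\<lambda>i. sy i (f b' ! i)) D"
    by (rule inj_onI) (use injsy in \<open>auto simp: D_def\<close>)
  have s1: "(\<Sum>i\<in>D. cy i (f b ! i)) \<le> size (T - T')"
  proof -
    have "(\<Sum>i\<in>D. cy i (f b ! i)) \<le> (\<Sum>i\<in>D. count (T - T') (sy i (f b ! i)))"
    proof (rule sum_mono)
      fix i assume i: "i \<in> D"
      then have "i < m" "f b ! i = (\<not> f b' ! i)" unfolding D_def by auto
      then show "cy i (f b ! i) \<le> count (T - T') (sy i (f b ! i))"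
        using cT[OF \<open>i < m\<close>] cT'[OF \<open>i < m\<close>] by simp
    qed
    also have "\<dots> = (\<Sum>x\<in>(\<lambda>i. sy i (f b ! i)) ` D. count (T - T') x)"
      by (simp add: sum.reindex[OF inj1])
    also have "\<dots> \<le> size (T - T')" by (rule sum_count_le_size) (use finD in simp)
    finally show ?thesis .
  qed
  have s2: "(\<Sum>i\<in>D. cy i (f b' ! i)) \<le> size (T' - T)"
  proof -
    have "(\<Sum>i\<in>D. cy i (f b' ! i)) \<le> (\<Sum>i\<in>D. count (T' - T) (sy i (f b' ! i)))"
    proof (rule sum_mono)
      fix i assume i: "i \<in> D"
      then have "i < m" "f b' ! i = (\<not> f b ! i)" unfolding D_def by auto
      then show "cy i (f b' ! i) \<le> count (T' - T) (sy i (f b' ! i))"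
        using cT[OF \<open>i < m\<close>] cT'[OF \<open>i < m\<close>] by simp
    qed
    also have "\<dots> = (\<Sum>x\<in>(\<lambda>i. sy i (f b' ! i)) ` D. count (T' - T) x)"
      by (simp add: sum.reindex[OF inj2])
    also have "\<dots> \<le> size (T' - T)" by (rule sum_count_le_size) (use finD in simp)
    finally show ?thesis .
  qed
  have "(\<Sum>i\<in>D. cy i False + cy i True) = (\<Sum>i\<in>D. cy i (f b ! i) + cy i (f b' ! i))"
    by (rule sum.cong) (auto simp: D_def)
  also have "\<dots> = (\<Sum>i\<in>D. cy i (f b ! i)) + (\<Sum>i\<in>D. cy i (f b' ! i))"
    by (simp add: sum.distrib)
  also have "\<dots> \<le> md T T'" unfolding md_def using s1 s2 by linarith
  finally show ?thesis using dT dA unfolding D_def by linarith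
qed

end
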